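(* There is an absolute constant $C>0$ such that for every $n\in\mathbb{N}$, every nonempty $B\subseteq[n]$ and every $\varepsilon\in(0,1)$, there is a randomized nonadaptive algorithm which, given oracle access to $g:B\to\mathbb{R}$, makes at most $C\cdot\max\{1,\log_2(\varepsilon|B|)\}$ queries, accepts with probability $1$ whenever $g$ is convex, and rejects with probability at least $\varepsilon$ whenever $g$ is $\varepsilon$-far from convex.
   Context: For a finite set $B\subseteq\mathbb{R}$, $g:B\to\mathbb{R}$ is convex if $\frac{g(y)-g(x)}{y-x}\le\frac{g(z)-g(y)}{z-y}$ for all $x<y<z$ in $B$ (using the actual positions of the points). $g$ is $\varepsilon$-far from convex if every convex $h:B\to\mathbb{R}$ differs from $g$ on at least $\varepsilon|B|$ points of $B$. Nonadaptive means all query points are chosen (randomly) before any answer is seen. *)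

theory Defs
  imports "HOL-Probability.Probability_Mass_Function"
begin

definition convex_on_pts :: "nat set \<Rightarrow> (nat \<Rightarrow> real) \<Rightarrow> bool" where
  "convex_on_pts B g \<longleftrightarrow>
     (\<forall>x\<in>B. \<forall>y\<in>B. \<forall>z\<in>B. x < y \<and> y < z \<longrightarrow>
        (g y - g x) / (real y - real x) \<le> (g z - g y) / (real z - real y))"

definition eps_far_from_convex :: "nat set \<Rightarrow> real \<Rightarrow> (nat \<Rightarrow> real) \<Rightarrow> bool" where
  "eps_far_from_convex B eps g \<longleftrightarrow>
     (\<forall>h. convex_on_pts B h \<longrightarrow> real (card {x\<in>B. g x \<noteq> h x}) \<ge> eps * real (card B))"

text \<open>A randomized nonadaptive algorithm on domain B is a probability distribution over pairs
  (Q, D): a query set Q and a decision rule D (True = accept) which only depends on the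
  oracle's answers on Q. The randomness is chosen before any query is answered.\<close>
definition nonadaptive_alg :: "nat set \<Rightarrow> nat \<Rightarrow> (nat set \<times> ((nat \<Rightarrow> real) \<Rightarrow> bool)) pmf \<Rightarrow> bool" where
  "nonadaptive_alg B q A \<longleftrightarrow>
     (\<forall>(Q, D) \<in> set_pmf A. Q \<subseteq> B \<and> finite Q \<and> card Q \<le> q \<and>
        (\<forall>g h. (\<forall>x\<in>Q. g x = h x) \<longrightarrow> D g = D h))"

definition accept_prob :: "(nat set \<times> ((nat \<Rightarrow> real) \<Rightarrow> bool)) pmf \<Rightarrow> (nat \<Rightarrow> real) \<Rightarrow> real" where
  "accept_prob A g = measure_pmf.prob A {a. snd a g}"

end

theory Submission imports Defs begin


definition sl :: "(nat \<Rightarrow> real) \<Rightarrow> nat \<Rightarrow> nat \<Rightarrow> real" where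
  "sl g x y = (g y - g x) / (real y - real x)"

lemma slope3a:
  fixes x y z :: nat assumes "x < y" "y < z"
  shows "sl g x y \<le> sl g y z \<longleftrightarrow> sl g x y \<le> sl g x z"
proof -
  have h1: "real x < real y" "real y < real z" using assms by auto
  show ?thesis unfolding sl_def using h1
    by (simp add: field_simps)
qed

lemma slope3b:
  fixes x y z :: nat assumes "x < y" "y < z"
  shows "sl g x y \<le> sl g y z \<longleftrightarrow> sl g x z \<le> sl g y z"
proof -
  have h1: "real x < real y" "real y < real z" using assms by auto
  show ?thesis unfolding sl_def using h1
    by (simp add: field_simps)
qed

lemma convD:
  assumes "convex_on_pts T g" "x \<in> T" "y \<in> T" "z \<in> T" "x < y" "y < z"
  shows "sl g x y \<le> sl g y z" "sl g x y \<le> sl g x z" "sl g x z \<le> sl g y z"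
proof -
  show 1: "sl g x y \<le> sl g y z" using assms unfolding convex_on_pts_def sl_def by blast
  show "sl g x y \<le> sl g x z" using 1 slope3a[OF assms(5,6)] by blast
  show "sl g x z \<le> sl g y z" using 1 slope3b[OF assms(5,6)] by blast
qed

lemma local_global:
  assumes loc: "\<And>a b c. a\<in>G \<Longrightarrow> b\<in>G \<Longrightarrow> c\<in>G \<Longrightarrow> a<b \<Longrightarrow> b<c \<Longrightarrow>
     (\<forall>d\<in>G. \<not>(a<d \<and> d<b)) \<Longrightarrow> (\<forall>d\<in>G. \<not>(b<d \<and> d<c)) \<Longrightarrow> sl g a b \<le> sl g b c"
  shows "convex_on_pts G g"
proof -
  have main: "sl g a b \<le> sl g b c" if "a\<in>G" "b\<in>G" "c\<in>G" "a<b" "b<c" for a b c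
    using that
  proof (induction "c - a" arbitrary: a b c rule: less_induct)
    case less
    show ?case
    proof (cases "\<exists>d\<in>G. a<d \<and> d<b")
      case True
      then obtain d where d: "d\<in>G" "a<d" "d<b" by blast
      have i1: "sl g a d \<le> sl g d b" using less.hyps[of b a d] less.prems d by auto
      have i2: "sl g d b \<le> sl g b c" using less.hyps[of c d b] less.prems d by auto
      have "sl g a b \<le> sl g d b" using i1 slope3b[of a d b g] d by auto
      then show ?thesis using i2 by linarith
    next
      case F1: False
      show ?thesis
      proof (cases "\<exists>d\<in>G. b<d \<and> d<c")
        case True
        then obtain d where d: "d\<in>G" "b<d" "d<c" by blast
        have i1: "sl g a b \<le> sl g b d" using less.hyps[of d a b] less.prems d by auto
        have i2: "sl g b d \<le> sl g d c" using less.hyps[of c b d] less.prems d by auto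
        have "sl g b d \<le> sl g b c" using i2 slope3a[of b d c g] d by auto
        then show ?thesis using i1 by linarith
      next
        case False
        then show ?thesis using F1 loc less.prems by blast
      qed
    qed
  qed
  show ?thesis unfolding convex_on_pts_def using main unfolding sl_def by blast
qed

lemma core:
  assumes conv: "\<And>x. x \<in> {a,b,c} \<Longrightarrow> convex_on_pts (T x) g"
    and self: "\<And>x. x \<in> {a,b,c} \<Longrightarrow> x \<in> T x"
    and ord: "a < b" "b < c"
    and P: "\<And>u v. u \<in> {a,b,c} \<Longrightarrow> v \<in> {a,b,c} \<Longrightarrow> u < v \<Longrightarrow>
       \<exists>w1 w2. u \<le> w1 \<and> w1 < w2 \<and> w2 \<le> v \<and>
         (\<forall>y\<in>{a,b,c}. \<not>(w1 < y \<and> y < w2) \<and> (u \<le> y \<and> y \<le> v \<longrightarrow> w1 \<in> T y \<and> w2 \<in> T y))"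
  shows "sl g a b \<le> sl g b c"
proof -
  have Ca: "convex_on_pts (T a) g" and Cb: "convex_on_pts (T b) g" and Cc: "convex_on_pts (T c) g"
    using conv by auto
  have sa: "a \<in> T a" and sb: "b \<in> T b" and sc: "c \<in> T c" using self by auto
  obtain w1 w2 where W: "a \<le> w1" "w1 < w2" "w2 \<le> c"
    and Wy: "\<forall>y\<in>{a,b,c}. \<not>(w1 < y \<and> y < w2) \<and> (a \<le> y \<and> y \<le> c \<longrightarrow> w1 \<in> T y \<and> w2 \<in> T y)"
    using P[of a c] ord by auto
  have wa: "w1 \<in> T a" "w2 \<in> T a" and wb: "w1 \<in> T b" "w2 \<in> T b" and wc: "w1 \<in> T c" "w2 \<in> T c"
    using Wy ord by auto
  have "b \<le> w1 \<or> w2 \<le> b" using Wy by force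
  then show ?thesis
  proof
    assume bw: "b \<le> w1"
    have C1: "sl g b w2 \<le> sl g b c"
    proof (cases "w2 = c")
      case True then show ?thesis by simp
    next
      case False
      then have "w2 < c" using W by auto
      then have e1: "sl g w1 w2 \<le> sl g w2 c" using convD(1)[OF Cc wc sc] W by auto
      have e2: "sl g b w2 \<le> sl g w1 w2"
      proof (cases "b = w1")
        case True then show ?thesis by simp
      next
        case False then show ?thesis using convD(3)[OF Cb sb wb] bw W by auto
      qed
      have "sl g b w2 \<le> sl g w2 c" using e1 e2 by linarith
      then show ?thesis using slope3a[of b w2 c g] bw W \<open>w2 < c\<close> by auto
    qed
    obtain v1 v2 where V: "a \<le> v1" "v1 < v2" "v2 \<le> b"
      and Vy: "\<forall>y\<in>{a,b,c}. (a \<le> y \<and> y \<le> b \<longrightarrow> v1 \<in> T y \<and> v2 \<in> T y)"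
      using P[of a b] ord by blast
    have va: "v1 \<in> T a" "v2 \<in> T a" and vb: "v1 \<in> T b" "v2 \<in> T b" using Vy ord by auto
    have f1: "sl g a v2 \<le> sl g v1 v2"
    proof (cases "a = v1")
      case True then show ?thesis by simp
    next
      case False then show ?thesis using convD(3)[OF Ca sa va] V by auto
    qed
    have f2: "sl g v1 v2 \<le> sl g v2 w2" using convD(1)[OF Cb vb(1,2) wb(2)] V bw W by auto
    have C2: "sl g a b \<le> sl g b w2"
    proof (cases "v2 = b")
      case True then show ?thesis using f1 f2 by simp
    next
      case False
      then have "v2 < b" using V by auto
      have f3: "sl g v2 b \<le> sl g b w2" using convD(1)[OF Cb vb(2) sb wb(2)] \<open>v2 < b\<close> bw W by auto
      have f4: "sl g v1 v2 \<le> sl g v2 b" using convD(1)[OF Cb vb sb] V \<open>v2 < b\<close> by auto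
      have "sl g a v2 \<le> sl g v2 b" using f1 f4 by linarith
      then have "sl g a b \<le> sl g v2 b" using slope3b[of a v2 b g] \<open>v2 < b\<close> V by auto
      then show ?thesis using f3 by linarith
    qed
    show ?thesis using C1 C2 by linarith
  next
    assume bw: "w2 \<le> b"
    have C1: "sl g a b \<le> sl g w1 b"
    proof (cases "w1 = a")
      case True then show ?thesis by simp
    next
      case False
      then have "a < w1" using W by auto
      then have e1: "sl g a w1 \<le> sl g w1 w2" using convD(1)[OF Ca sa wa] W by auto
      have e2: "sl g w1 w2 \<le> sl g w1 b"
      proof (cases "b = w2")
        case True then show ?thesis by simp
      next
        case False then show ?thesis using convD(2)[OF Cb wb sb] bw W by auto
      qed
      have "sl g a w1 \<le> sl g w1 b" using e1 e2 by linarith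
      then show ?thesis using slope3b[of a w1 b g] bw W \<open>a < w1\<close> by auto
    qed
    obtain z1 z2 where Z: "b \<le> z1" "z1 < z2" "z2 \<le> c"
      and Zy: "\<forall>y\<in>{a,b,c}. (b \<le> y \<and> y \<le> c \<longrightarrow> z1 \<in> T y \<and> z2 \<in> T y)"
      using P[of b c] ord by blast
    have zb: "z1 \<in> T b" "z2 \<in> T b" and zc: "z1 \<in> T c" "z2 \<in> T c" using Zy ord by auto
    have f1: "sl g z1 z2 \<le> sl g z1 c"
    proof (cases "z2 = c")
      case True then show ?thesis by simp
    next
      case False then show ?thesis using convD(2)[OF Cc zc sc] Z by auto
    qed
    have C2: "sl g w1 b \<le> sl g b c"
    proof (cases "z1 = b")
      case True
      have "sl g w1 b \<le> sl g b z2" using convD(1)[OF Cb wb(1) sb zb(2)] True Z bw W by auto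
      moreover have "sl g b z2 \<le> sl g b c" using f1 True by simp
      ultimately show ?thesis by linarith
    next
      case False
      then have "b < z1" using Z by auto
      have f3: "sl g w1 b \<le> sl g b z1" using convD(1)[OF Cb wb(1) sb zb(1)] \<open>b < z1\<close> bw W by auto
      have f4: "sl g b z1 \<le> sl g z1 z2" using convD(1)[OF Cb sb zb] Z \<open>b < z1\<close> by auto
      have "sl g b z1 \<le> sl g z1 c" using f1 f4 by linarith
      then have "sl g b z1 \<le> sl g b c" using slope3a[of b z1 c g] \<open>b < z1\<close> Z by auto
      then show ?thesis using f3 by linarith
    qed
    show ?thesis using C1 C2 by linarith
  qed
qed



definition splitpt :: "nat \<Rightarrow> nat \<Rightarrow> nat \<Rightarrow> nat" where
  "splitpt s t i = ((i+s) div 2^(Suc t)) * 2^(Suc t) + 2^t - s"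

lemma level:
  fixes i k :: nat
  assumes "i < k" "i div 2^(Suc L0) = k div 2^(Suc L0)"
  shows "\<exists>t<Suc L0. i < (i div 2^(Suc t)) * 2^(Suc t) + 2^t \<and> (i div 2^(Suc t)) * 2^(Suc t) + 2^t \<le> k
     \<and> (\<forall>l. i \<le> l \<and> l \<le> k \<longrightarrow> l div 2^(Suc t) = i div 2^(Suc t))"
proof -
  define t where "t = (LEAST t. i div 2^(Suc t) = k div 2^(Suc t))"
  have tP: "i div 2^(Suc t) = k div 2^(Suc t)" unfolding t_def using assms(2) by (rule LeastI)
  have tL: "t \<le> L0" unfolding t_def using assms(2) by (rule Least_le)
  have neq: "i div 2^t \<noteq> k div 2^t"
  proof (cases t)
    case 0 then show ?thesis using assms by simp
  next
    case (Suc t0)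
    have "t0 < t" using Suc by simp
    then have "i div 2^(Suc t0) \<noteq> k div 2^(Suc t0)" unfolding t_def by (rule not_less_Least)
    then show ?thesis using Suc by simp
  qed
  define D where "D = i div 2^(Suc t)"
  define A where "A = i div 2^t"
  define Bk where "Bk = k div 2^t"
  have "A \<le> Bk" unfolding A_def Bk_def using assms(1) by (simp add: div_le_mono)
  with neq have AB: "A < Bk" unfolding A_def Bk_def by simp
  have e1: "A div 2 = D" unfolding A_def D_def power_Suc2 div_mult2_eq by simp
  have e2: "Bk div 2 = D" using tP unfolding Bk_def D_def power_Suc2 div_mult2_eq by simp
  have "2*(A div 2) \<le> A" "A < 2*(A div 2) + 2" "2*(Bk div 2) \<le> Bk" "Bk < 2*(Bk div 2) + 2" by linarith+
  then have A2: "A = 2*D" and B2: "Bk = 2*D + 1" using AB e1 e2 by linarith+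
  have p: "(0::nat) < 2^t" by simp
  have "i < (A+1) * 2^t" unfolding A_def using dividend_less_div_times[OF p, of i] by simp
  then have c1: "i < D * 2^(Suc t) + 2^t" using A2 by (simp add: algebra_simps)
  have "Bk * 2^t \<le> k" unfolding Bk_def by simp
  then have c2: "D * 2^(Suc t) + 2^t \<le> k" using B2 by (simp add: algebra_simps)
  have c3: "l div 2^(Suc t) = D" if "i \<le> l" "l \<le> k" for l
  proof -
    have "i div 2^(Suc t) \<le> l div 2^(Suc t)" using that by (simp add: div_le_mono)
    moreover have "l div 2^(Suc t) \<le> k div 2^(Suc t)" using that by (simp add: div_le_mono)
    ultimately show ?thesis using tP unfolding D_def by simp
  qed
  have "t < Suc L0" using tL by simp
  then show ?thesis using c1 c2 c3 unfolding D_def by blast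
qed

lemma shiftP:
  fixes i k :: nat
  assumes "i < k" "k < i + 2^L0"
  shows "\<exists>s\<in>{0, 2^L0}. (i+s) div 2^(Suc L0) = (k+s) div 2^(Suc L0)"
proof (cases "i div 2^(Suc L0) = k div 2^(Suc L0)")
  case True then show ?thesis by auto
next
  case False
  define K where "K = (2::nat)^(Suc L0)"
  define H where "H = (2::nat)^L0"
  have KH: "K = 2*H" unfolding K_def H_def by simp
  define q where "q = k div K"
  have Kp: "0 < K" unfolding K_def by simp
  have "i div K \<le> q" unfolding q_def using assms by (simp add: div_le_mono)
  with False have "i div K < q" unfolding q_def K_def by simp
  then have iq: "i < q * K" using div_less_iff_less_mult[OF Kp] by simp
  have qk: "q * K \<le> k" unfolding q_def by simp
  have kH: "k < i + H" using assms(2) unfolding H_def by simp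
  have KS: "K * Suc q = q*K + K" "K * q = q * K" by simp_all
  have 1: "(i+H) div K = q"
    by (rule div_nat_eqI) (use iq qk kH KH KS in linarith)+
  have 2: "(k+H) div K = q"
    by (rule div_nat_eqI) (use iq qk kH KH KS in linarith)+
  show ?thesis using 1 2 unfolding K_def H_def by auto
qed

lemma rankP:
  fixes i k :: nat
  assumes "i < k" "k < i + 2^L0"
  shows "\<exists>s\<in>{0, 2^L0}. \<exists>t<Suc L0. i < splitpt s t i \<and> splitpt s t i \<le> k \<and>
           (\<forall>l. i \<le> l \<and> l \<le> k \<longrightarrow> splitpt s t l = splitpt s t i)"
proof -
  obtain s where s: "s \<in> {0, 2^L0}" "(i+s) div 2^(Suc L0) = (k+s) div 2^(Suc L0)"
    using shiftP[OF assms] by blast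
  obtain t where t: "t < Suc L0"
    "i+s < ((i+s) div 2^(Suc t)) * 2^(Suc t) + 2^t"
    "((i+s) div 2^(Suc t)) * 2^(Suc t) + 2^t \<le> k+s"
    "\<forall>l. i+s \<le> l \<and> l \<le> k+s \<longrightarrow> l div 2^(Suc t) = (i+s) div 2^(Suc t)"
  proof -
    have "i+s < k+s" using assms(1) by simp
    then show ?thesis using level[of "i+s" "k+s" L0] s(2) that by blast
  qed
  have "i < splitpt s t i" "splitpt s t i \<le> k" using t(2,3) unfolding splitpt_def by linarith+
  moreover have "splitpt s t l = splitpt s t i" if "i \<le> l" "l \<le> k" for l
  proof -
    have "(l+s) div 2^(Suc t) = (i+s) div 2^(Suc t)" using that by (intro t(4)[rule_format]) simp
    then show ?thesis unfolding splitpt_def by simp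
  qed
  ultimately show ?thesis using s t by blast
qed



definition rk :: "nat set \<Rightarrow> nat \<Rightarrow> nat" where "rk B x = card {y\<in>B. y < x}"

definition Sset :: "nat \<Rightarrow> nat \<Rightarrow> nat set" where
  "Sset L0 i = insert i ((\<lambda>(s,t,e). splitpt s t i - e) ` ({0, 2^L0} \<times> {..<Suc L0} \<times> {0,1}))"

definition Tset :: "nat set \<Rightarrow> nat \<Rightarrow> nat \<Rightarrow> nat set" where
  "Tset B L0 x = {y\<in>B. rk B y \<in> Sset L0 (rk B x)}"

lemma card_Sset: "card (Sset L0 i) \<le> 4 * Suc L0 + 1"
proof -
  define SS where "SS = ({0::nat, 2^L0} \<times> {..<Suc L0} \<times> {0::nat,1})"
  have "card ((\<lambda>(s,t,e). splitpt s t i - e) ` SS) \<le> card SS" by (rule card_image_le) (simp add: SS_def)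
  also have "\<dots> = card {0::nat, 2^L0} * (Suc L0 * 2)" unfolding SS_def by (simp add: card_cartesian_product)
  also have "\<dots> \<le> 2 * (Suc L0 * 2)" by (intro mult_right_mono) (auto simp: card_insert_if)
  finally have "card ((\<lambda>(s,t,e). splitpt s t i - e) ` SS) \<le> 4 * Suc L0" by simp
  moreover have "card (Sset L0 i) \<le> card ((\<lambda>(s,t,e). splitpt s t i - e) ` SS) + 1"
    unfolding Sset_def SS_def by (simp add: card_insert_if)
  ultimately show ?thesis by linarith
qed

lemma rk_less: "finite B \<Longrightarrow> x \<in> B \<Longrightarrow> x < y \<Longrightarrow> rk B x < rk B y"
  unfolding rk_def by (rule psubset_card_mono) auto

lemma rk_lt_card: "finite B \<Longrightarrow> x \<in> B \<Longrightarrow> rk B x < card B"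
  unfolding rk_def by (rule psubset_card_mono) auto

lemma rk_less_iff: "finite B \<Longrightarrow> x \<in> B \<Longrightarrow> y \<in> B \<Longrightarrow> rk B x < rk B y \<longleftrightarrow> x < y"
  by (metis less_asym nat_neq_iff rk_less)

lemma rk_le_iff: "finite B \<Longrightarrow> x \<in> B \<Longrightarrow> y \<in> B \<Longrightarrow> rk B x \<le> rk B y \<longleftrightarrow> x \<le> y"
  by (meson not_less rk_less_iff)

lemma rk_image: assumes "finite B" shows "rk B ` B = {..<card B}"
proof -
  have inj: "inj_on (rk B) B" unfolding inj_on_def by (metis assms nat_neq_iff rk_less)
  have "rk B ` B \<subseteq> {..<card B}" using rk_lt_card[OF assms] by auto
  moreover have "card (rk B ` B) = card {..<card B}" using card_image[OF inj] by simp
  ultimately show ?thesis by (intro card_subset_eq) auto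
qed

lemma rk_surj: "finite B \<Longrightarrow> i < card B \<Longrightarrow> \<exists>y\<in>B. rk B y = i"
  using rk_image by (metis imageE lessThan_iff)

lemma rk_mid:
  assumes "finite B" "a \<in> B" "c \<in> B" "a < c"
  shows "rk B c = rk B a + 1 + card {y\<in>B. a < y \<and> y < c}"
proof -
  have eq: "{y\<in>B. y < c} = {y\<in>B. y < a} \<union> ({a} \<union> {y\<in>B. a < y \<and> y < c})" using assms by auto
  have "card ({y\<in>B. y < a} \<union> ({a} \<union> {y\<in>B. a < y \<and> y < c})) =
        card {y\<in>B. y < a} + card ({a} \<union> {y\<in>B. a < y \<and> y < c})"
    by (rule card_Un_disjoint) (use assms in auto)
  also have "card ({a} \<union> {y\<in>B. a < y \<and> y < c}) = 1 + card {y\<in>B. a < y \<and> y < c}"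
    by (subst card_Un_disjoint) (use assms in auto)
  finally show ?thesis unfolding rk_def eq by simp
qed

lemma self_Tset: "x \<in> B \<Longrightarrow> x \<in> Tset B L0 x"
  unfolding Tset_def Sset_def by auto

lemma PB:
  assumes fin: "finite B" and uv: "u \<in> B" "v \<in> B" "u < v" and gap: "rk B v < rk B u + 2^L0"
  shows "\<exists>w1 w2. w1 \<in> B \<and> w2 \<in> B \<and> u \<le> w1 \<and> w1 < w2 \<and> w2 \<le> v \<and> (\<forall>y\<in>B. \<not>(w1 < y \<and> y < w2)) \<and>
     (\<forall>y\<in>B. u \<le> y \<and> y \<le> v \<longrightarrow> w1 \<in> Tset B L0 y \<and> w2 \<in> Tset B L0 y)"
proof -
  have "rk B u < rk B v" using rk_less[OF fin uv(1,3)] .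
  then obtain s t where st: "s \<in> {0, 2^L0}" "t < Suc L0" "rk B u < splitpt s t (rk B u)"
     "splitpt s t (rk B u) \<le> rk B v"
     "\<forall>l. rk B u \<le> l \<and> l \<le> rk B v \<longrightarrow> splitpt s t l = splitpt s t (rk B u)"
    using rankP[of "rk B u" "rk B v" L0] gap by blast
  define w where "w = splitpt s t (rk B u)"
  have wc: "w < card B" using st(4) rk_lt_card[OF fin uv(2)] unfolding w_def by simp
  obtain w2 where w2: "w2 \<in> B" "rk B w2 = w" using rk_surj[OF fin wc] by blast
  have "w - 1 < card B" using wc by simp
  then obtain w1 where w1: "w1 \<in> B" "rk B w1 = w - 1" using rk_surj[OF fin, of "w-1"] by blast
  have "rk B u \<le> rk B w1" using w1 st(3) unfolding w_def by linarith
  then have o1: "u \<le> w1" using rk_le_iff[OF fin uv(1) w1(1)] by simp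
  have "rk B w1 < rk B w2" using w1 w2 st(3) unfolding w_def by linarith
  then have o2: "w1 < w2" using rk_less_iff[OF fin w1(1) w2(1)] by simp
  have "rk B w2 \<le> rk B v" using w2 st(4) unfolding w_def by linarith
  then have o3: "w2 \<le> v" using rk_le_iff[OF fin w2(1) uv(2)] by simp
  have o4: "\<not>(w1 < y \<and> y < w2)" if "y \<in> B" for y
    using rk_less_iff[OF fin w1(1) that] rk_less_iff[OF fin that w2(1)] w1 w2 by auto
  have o5: "w1 \<in> Tset B L0 y \<and> w2 \<in> Tset B L0 y" if "y \<in> B" "u \<le> y" "y \<le> v" for y
  proof -
    have "rk B u \<le> rk B y" "rk B y \<le> rk B v" using rk_le_iff[OF fin] that uv by auto
    then have sp: "splitpt s t (rk B y) = w" using st(5) unfolding w_def by blast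
    have "w - 1 \<in> Sset L0 (rk B y)" unfolding Sset_def
      using st(1,2) sp by (intro insertI2 image_eqI[of _ _ "(s,t,1)"]) auto
    moreover have "w \<in> Sset L0 (rk B y)" unfolding Sset_def
      using st(1,2) sp by (intro insertI2 image_eqI[of _ _ "(s,t,0)"]) auto
    ultimately show ?thesis unfolding Tset_def using w1 w2 by auto
  qed
  show ?thesis using w1(1) w2(1) o1 o2 o3 o4 o5 by blast
qed

lemma G_convex:
  fixes g :: "nat \<Rightarrow> real"
  assumes fin: "finite B"
    and Gdef: "G = {x\<in>B. convex_on_pts (Tset B L0 x) g}"
    and small: "card (B - G) + 3 \<le> 2^L0"
  shows "convex_on_pts G g"
proof (rule local_global)
  fix a b c assume abc: "a \<in> G" "b \<in> G" "c \<in> G" "a < b" "b < c"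
    and n1: "\<forall>d\<in>G. \<not>(a<d \<and> d<b)" and n2: "\<forall>d\<in>G. \<not>(b<d \<and> d<c)"
  have GB: "G \<subseteq> B" using Gdef by auto
  have inB: "a \<in> B" "b \<in> B" "c \<in> B" using abc GB by auto
  have "{y\<in>B. a < y \<and> y < c} \<subseteq> insert b (B - G)" using n1 n2 by auto
  then have "card {y\<in>B. a < y \<and> y < c} \<le> card (insert b (B - G))"
    by (intro card_mono) (use fin in auto)
  also have "\<dots> \<le> card (B - G) + 1" by (simp add: card_insert_le_m1 fin card_insert_if)
  finally have "rk B c < rk B a + 2^L0" using rk_mid[OF fin inB(1,3)] abc small by linarith
  moreover have "rk B a \<le> rk B b" "rk B b \<le> rk B c" using rk_le_iff[OF fin] inB abc by auto
  ultimately have gaps: "rk B v < rk B u + 2^L0" if "u \<in> {a,b,c}" "v \<in> {a,b,c}" "u < v" for u v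
    using that rk_less_iff[OF fin] inB by auto
  show "sl g a b \<le> sl g b c"
  proof (rule core[where T="Tset B L0"])
    show "convex_on_pts (Tset B L0 x) g" if "x \<in> {a,b,c}" for x using that abc Gdef by auto
    show "x \<in> Tset B L0 x" if "x \<in> {a,b,c}" for x using that inB self_Tset by auto
    show "a < b" "b < c" using abc by auto
    fix u v assume uv: "u \<in> {a,b,c}" "v \<in> {a,b,c}" "u < v"
    have "u \<in> B" "v \<in> B" using uv inB by auto
    from PB[OF fin this uv(3) gaps[OF uv]] obtain w1 w2 where
      W: "u \<le> w1" "w1 < w2" "w2 \<le> v" "\<forall>y\<in>B. \<not>(w1 < y \<and> y < w2)"
      "\<forall>y\<in>B. u \<le> y \<and> y \<le> v \<longrightarrow> w1 \<in> Tset B L0 y \<and> w2 \<in> Tset B L0 y" by blast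
    show "\<exists>w1 w2. u \<le> w1 \<and> w1 < w2 \<and> w2 \<le> v \<and>
         (\<forall>y\<in>{a,b,c}. \<not>(w1 < y \<and> y < w2) \<and> (u \<le> y \<and> y \<le> v \<longrightarrow> w1 \<in> Tset B L0 y \<and> w2 \<in> Tset B L0 y))"
      using W inB by blast
  qed
qed



definition chl :: "(nat \<Rightarrow> real) \<Rightarrow> nat \<Rightarrow> nat \<Rightarrow> nat \<Rightarrow> real" where
  "chl g a b x = g a + sl g a b * (real x - real a)"

lemma chl_b: "a < b \<Longrightarrow> chl g a b b = g b"
  unfolding chl_def sl_def by (simp add: field_simps)

lemma chl_a: "chl g a b a = g a"
  unfolding chl_def by simp

lemma chl_le:
  assumes conv: "convex_on_pts G g" and G: "a \<in> G" "b \<in> G" "c \<in> G" and ab: "a < b"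
    and nb: "\<not>(a < c \<and> c < b)"
  shows "chl g a b c \<le> g c"
proof -
  consider "c < a" | "c = a" | "c = b" | "b < c" using nb by linarith
  then show ?thesis
  proof cases
    case 1
    have i: "sl g c a \<le> sl g a b" using convD(1)[OF conv G(3,1,2) 1 ab] .
    have d: "real a - real c > 0" using 1 by simp
    have "sl g c a = (g a - g c) / (real a - real c)" by (simp add: sl_def)
    then have "g a - g c \<le> sl g a b * (real a - real c)" using i pos_divide_le_eq[OF d] by simp
    moreover have "sl g a b * (real c - real a) = - (sl g a b * (real a - real c))" by (simp add: algebra_simps)
    ultimately show ?thesis unfolding chl_def by linarith
  next
    case 2 then show ?thesis using chl_a by simp
  next
    case 3 then show ?thesis using chl_b[OF ab] by simp
  next
    case 4
    have i: "sl g a b \<le> sl g b c" using convD(1)[OF conv G(1,2,3) ab 4] .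
    have d: "real c - real b > 0" using 4 by simp
    have "sl g b c = (g c - g b) / (real c - real b)" by (simp add: sl_def)
    then have "sl g a b * (real c - real b) \<le> g c - g b" using i pos_le_divide_eq[OF d] by simp
    moreover have "g a + sl g a b * (real b - real a) = g b" using chl_b[OF ab] unfolding chl_def .
    moreover have "sl g a b * (real c - real a) = sl g a b * (real c - real b) + sl g a b * (real b - real a)"
      by (simp add: algebra_simps)
    ultimately show ?thesis unfolding chl_def by linarith
  qed
qed

lemma max_affine_conv:
  fixes X Y Z hX hY hZ al be :: real
  assumes "X < Y" "Y < Z" "hY = al + be * Y" "al + be * X \<le> hX" "al + be * Z \<le> hZ"
  shows "(hY - hX) / (Y - X) \<le> (hZ - hY) / (Z - Y)"
proof -
  have p1: "(al + be * X) * (Z - Y) \<le> hX * (Z - Y)" using assms by (intro mult_right_mono) auto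
  have p2: "(al + be * Z) * (Y - X) \<le> hZ * (Y - X)" using assms by (intro mult_right_mono) auto
  have "(hY - hX) * (Z - Y) \<le> (hZ - hY) * (Y - X)"
    using p1 p2 assms(3) by (simp add: algebra_simps)
  then show ?thesis using assms(1,2) by (simp add: field_simps)
qed

lemma extend:
  fixes g :: "nat \<Rightarrow> real"
  assumes fin: "finite G" and conv: "convex_on_pts G g" and ne: "G \<noteq> {}"
  shows "\<exists>h. convex_on_pts B h \<and> (\<forall>x\<in>G. h x = g x)"
proof (cases "\<exists>a b. a \<in> G \<and> b \<in> G \<and> a < b")
  case False
  then obtain a0 where "a0 \<in> G" using ne by blast
  then have "G = {a0}" using False by (metis linorder_neqE_nat singleton_iff subsetI subset_antisym  empty_subsetI insert_subset)
  then show ?thesis unfolding convex_on_pts_def by (intro exI[of _ "\<lambda>_. g a0"]) auto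
next
  case True
  define P where "P = {(a,b). a \<in> G \<and> b \<in> G \<and> a < b \<and> (\<forall>d\<in>G. \<not>(a < d \<and> d < b))}"
  have Pfin: "finite P" unfolding P_def
    by (rule finite_subset[of _ "G \<times> G"]) (use fin in auto)
  have succ: "(c, Min {d\<in>G. c < d}) \<in> P" if "c \<in> G" "\<exists>d\<in>G. c < d" for c
  proof -
    have f: "finite {d\<in>G. c < d}" "{d\<in>G. c < d} \<noteq> {}" using fin that by auto
    show ?thesis unfolding P_def using Min_in[OF f] Min_le[OF f(1)] that by fastforce
  qed
  have pred: "(Max {d\<in>G. d < c}, c) \<in> P" if "c \<in> G" "\<exists>d\<in>G. d < c" for c
  proof -
    have f: "finite {d\<in>G. d < c}" "{d\<in>G. d < c} \<noteq> {}" using fin that by auto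
    show ?thesis unfolding P_def using Max_in[OF f] Max_ge[OF f(1)] that by fastforce
  qed
  have Pne: "P \<noteq> {}" using True succ by blast
  define h where "h x = Max ((\<lambda>p. chl g (fst p) (snd p) x) ` P)" for x
  have hge: "chl g a b x \<le> h x" if "(a,b) \<in> P" for a b x
    unfolding h_def using Pfin that by (intro Max_ge) force+
  have hin: "\<exists>p\<in>P. h x = chl g (fst p) (snd p) x" for x
  proof -
    have "h x \<in> (\<lambda>p. chl g (fst p) (snd p) x) ` P" unfolding h_def using Pfin Pne by (intro Max_in) auto
    then show ?thesis by auto
  qed
  have hconv: "convex_on_pts B h" unfolding convex_on_pts_def
  proof (intro ballI impI)
    fix x y z :: nat assume "x \<in> B" "y \<in> B" "z \<in> B" and xyz: "x < y \<and> y < z"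
    obtain p where p: "p \<in> P" "h y = chl g (fst p) (snd p) y" using hin by blast
    obtain a b where ab: "p = (a,b)" by fastforce
    show "(h y - h x) / (real y - real x) \<le> (h z - h y) / (real z - real y)"
    proof (rule max_affine_conv[where al = "g a - sl g a b * real a" and be = "sl g a b"])
      show "real x < real y" "real y < real z" using xyz by auto
      show "h y = g a - sl g a b * real a + sl g a b * real y" using p ab unfolding chl_def by (simp add: algebra_simps)
      show "g a - sl g a b * real a + sl g a b * real x \<le> h x" using hge[of a b x] p ab unfolding chl_def by (simp add: algebra_simps)
      show "g a - sl g a b * real a + sl g a b * real z \<le> h z" using hge[of a b z] p ab unfolding chl_def by (simp add: algebra_simps)
    qed
  qed
  have heq: "h c = g c" if c: "c \<in> G" for c
  proof -
    have le: "h c \<le> g c"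
    proof -
      obtain p where p: "p \<in> P" "h c = chl g (fst p) (snd p) c" using hin by blast
      obtain a b where ab: "p = (a,b)" by fastforce
      have "a \<in> G" "b \<in> G" "a < b" "\<not>(a < c \<and> c < b)" using p(1) ab c unfolding P_def by auto
      then show ?thesis using chl_le[OF conv _ _ c] p ab by simp
    qed
    have ge: "g c \<le> h c"
    proof (cases "\<exists>d\<in>G. c < d")
      case True
      have "chl g c (Min {d\<in>G. c < d}) c \<le> h c" using hge[OF succ[OF c True]] .
      then show ?thesis using chl_a by simp
    next
      case False
      then have ex: "\<exists>d\<in>G. d < c" using True c by (metis linorder_neqE_nat)
      have pr: "(Max {d\<in>G. d < c}, c) \<in> P" using pred[OF c ex] .
      then have "Max {d\<in>G. d < c} < c" unfolding P_def by auto
      then have "chl g (Max {d\<in>G. d < c}) c c = g c" by (rule chl_b)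
      then show ?thesis using hge[OF pr, of c] by simp
    qed
    show ?thesis using le ge by simp
  qed
  show ?thesis using hconv heq by blast
qed



lemma numbers:
  fixes X :: real assumes X: "X > 0"
  shows "X + 3 \<le> 2 ^ (nat \<lceil>log 2 (X+3)\<rceil>)"
    and "real (4 * Suc (nat \<lceil>log 2 (X+3)\<rceil>) + 1) \<le> 21 * max 1 (log 2 X)"
proof -
  define c where "c = \<lceil>log 2 (X+3)\<rceil>"
  have lpos: "log 2 (X+3) > 0" using X by simp
  have c0: "c \<ge> 0" unfolding c_def using lpos by linarith
  have rc: "real (nat c) = of_int c" using c0 by simp
  have "X + 3 = 2 powr (log 2 (X+3))" using X by simp
  also have "\<dots> \<le> 2 powr (real (nat c))"
  proof (intro powr_mono)
    have "log 2 (X+3) \<le> of_int c" unfolding c_def by simp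
    then show "log 2 (X+3) \<le> real (nat c)" using rc by linarith
  qed simp
  also have "\<dots> = 2 ^ nat c" by (simp add: powr_realpow)
  finally show "X + 3 \<le> 2 ^ (nat \<lceil>log 2 (X+3)\<rceil>)" unfolding c_def .
  define M where "M = max 1 (log 2 X)"
  have M1: "M \<ge> 1" "log 2 X \<le> M" unfolding M_def by auto
  have lb: "log 2 (X+3) \<le> 3 * M"
  proof (cases "X \<le> 1")
    case True
    have "log 2 (X+3) \<le> log 2 4" using X True by (intro log_mono) auto
    also have "log 2 (4::real) = 2"
      using log_pow_cancel[of "2::real" 2] by simp
    finally show ?thesis using M1 by linarith
  next
    case False
    have "log 2 (X+3) \<le> log 2 (4 * X)" using X False by (intro log_mono) auto
    also have "\<dots> = log 2 4 + log 2 X" using X by (simp add: log_mult)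
    also have "log 2 (4::real) = 2"
      using log_pow_cancel[of "2::real" 2] by simp
    finally show ?thesis using M1 by linarith
  qed
  have "of_int c \<le> log 2 (X+3) + 1" unfolding c_def by simp
  then have "real (nat c) \<le> 3 * M + 1" using rc lb by linarith
  moreover have "real (4 * Suc (nat c) + 1) = 4 * real (nat c) + 5" by simp
  ultimately have "real (4 * Suc (nat c) + 1) \<le> 21 * M" using M1 by linarith
  then show "real (4 * Suc (nat \<lceil>log 2 (X+3)\<rceil>) + 1) \<le> 21 * max 1 (log 2 X)" unfolding c_def M_def .
qed

lemma card_Tset: assumes "finite B" "x \<in> B" shows "card (Tset B L0 x) \<le> 4 * Suc L0 + 1"
proof -
  have inj: "inj_on (rk B) (Tset B L0 x)" unfolding inj_on_def Tset_def
    by (metis (no_types, lifting) assms(1) mem_Collect_eq nat_neq_iff rk_less)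
  have "card (Tset B L0 x) = card (rk B ` Tset B L0 x)" using card_image[OF inj] by simp
  also have "\<dots> \<le> card (Sset L0 (rk B x))"
    by (rule card_mono) (auto simp: Sset_def Tset_def)
  also have "\<dots> \<le> 4 * Suc L0 + 1" by (rule card_Sset)
  finally show ?thesis .
qed

theorem mainTheorem7:
  shows "\<exists>C::real. C > 0 \<and>
    (\<forall>(n::nat) (B::nat set) (eps::real).
       B \<noteq> {} \<and> B \<subseteq> {1..n} \<and> 0 < eps \<and> eps < 1 \<longrightarrow>
       (\<exists>A q. nonadaptive_alg B q A \<and>
          real q \<le> C * max 1 (log 2 (eps * real (card B))) \<and>
          (\<forall>g. convex_on_pts B g \<longrightarrow> accept_prob A g = 1) \<and>
          (\<forall>g. eps_far_from_convex B eps g \<longrightarrow> 1 - accept_prob A g \<ge> eps)))"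
proof (intro exI[of _ 21] conjI allI impI)
  show "(0::real) < 21" by simp
  fix n :: nat and B :: "nat set" and eps :: real
  assume asm: "B \<noteq> {} \<and> B \<subseteq> {1..n} \<and> 0 < eps \<and> eps < 1"
  have fin: "finite B" using asm finite_subset by blast
  have ne: "B \<noteq> {}" using asm by blast
  have mpos: "card B > 0" using fin ne by (simp add: card_gt_0_iff)
  define X where "X = eps * real (card B)"
  have Xpos: "X > 0" unfolding X_def using asm mpos by simp
  define L0 where "L0 = nat \<lceil>log 2 (X+3)\<rceil>"
  have L0big: "X + 3 \<le> 2 ^ L0" unfolding L0_def using numbers(1)[OF Xpos] .
  define q where "q = 4 * Suc L0 + 1"
  have qb: "real q \<le> 21 * max 1 (log 2 (eps * real (card B)))"
    unfolding q_def L0_def using numbers(2)[OF Xpos] unfolding X_def .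
  define f where "f x = (Tset B L0 x, \<lambda>h. convex_on_pts (Tset B L0 x) h)" for x
  define A where "A = map_pmf f (pmf_of_set B)"
  have na: "nonadaptive_alg B q A"
    unfolding nonadaptive_alg_def A_def
  proof (intro ballI)
    fix p assume "p \<in> set_pmf (map_pmf f (pmf_of_set B))"
    then obtain x where x: "x \<in> B" "p = f x" using fin ne by auto
    have sub: "Tset B L0 x \<subseteq> B" unfolding Tset_def by auto
    have "finite (Tset B L0 x)" using finite_subset[OF sub fin] .
    moreover have "card (Tset B L0 x) \<le> q" unfolding q_def using card_Tset[OF fin x(1)] .
    moreover have "convex_on_pts (Tset B L0 x) g = convex_on_pts (Tset B L0 x) h"
      if "\<forall>y\<in>Tset B L0 x. g y = h y" for g h
      using that unfolding convex_on_pts_def by (metis (no_types, lifting))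
    ultimately show "case p of (Q, D) \<Rightarrow> Q \<subseteq> B \<and> finite Q \<and> card Q \<le> q \<and> (\<forall>g h. (\<forall>x\<in>Q. g x = h x) \<longrightarrow> D g = D h)"
      using sub x(2) unfolding f_def by auto
  qed
  have acc: "accept_prob A g = real (card {x\<in>B. convex_on_pts (Tset B L0 x) g}) / real (card B)" for g
  proof -
    have "accept_prob A g = measure (pmf_of_set B) (f -` {a. snd a g})"
      unfolding accept_prob_def A_def by simp
    also have "\<dots> = real (card (B \<inter> f -` {a. snd a g})) / real (card B)"
      using measure_pmf_of_set[OF ne fin] by simp
    also have "B \<inter> f -` {a. snd a g} = {x\<in>B. convex_on_pts (Tset B L0 x) g}" unfolding f_def by auto
    finally show ?thesis .
  qed
  show "\<exists>A q. nonadaptive_alg B q A \<and>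
          real q \<le> 21 * max 1 (log 2 (eps * real (card B))) \<and>
          (\<forall>g. convex_on_pts B g \<longrightarrow> accept_prob A g = 1) \<and>
          (\<forall>g. eps_far_from_convex B eps g \<longrightarrow> 1 - accept_prob A g \<ge> eps)"
  proof (intro exI[of _ A] exI[of _ q] conjI allI impI)
    show "nonadaptive_alg B q A" by (rule na)
    show "real q \<le> 21 * max 1 (log 2 (eps * real (card B)))" by (rule qb)
  next
    fix g assume cg: "convex_on_pts B g"
    have "{x\<in>B. convex_on_pts (Tset B L0 x) g} = B"
      using cg unfolding convex_on_pts_def Tset_def by auto
    then show "accept_prob A g = 1" using acc mpos by simp
  next
    fix g assume far: "eps_far_from_convex B eps g"
    define G where "G = {x\<in>B. convex_on_pts (Tset B L0 x) g}"
    have GB: "G \<subseteq> B" unfolding G_def by auto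
    have cardBG: "card (B - G) = card B - card G" using card_Diff_subset[OF finite_subset[OF GB fin] GB] .
    have cGB: "card G \<le> card B" using card_mono[OF fin GB] .
    show "1 - accept_prob A g \<ge> eps"
    proof (rule ccontr)
      assume "\<not> 1 - accept_prob A g \<ge> eps"
      then have "1 - real (card G) / real (card B) < eps" using acc unfolding G_def by simp
      then have "real (card B) - real (card G) < eps * real (card B)" using mpos by (simp add: field_simps)
      then have lt: "real (card (B - G)) < X" unfolding X_def using cardBG cGB by (simp add: of_nat_diff)
      then have "real (card (B - G)) + 3 \<le> 2 ^ L0" using L0big by linarith
      then have small: "card (B - G) + 3 \<le> 2 ^ L0" by (metis of_nat_add of_nat_le_iff of_nat_numeral of_nat_power)
      have cG: "convex_on_pts G g" using G_convex[OF fin G_def small] .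
      have X_lt: "X < real (card B)" unfolding X_def using asm mpos by simp
      have "G \<noteq> {}"
      proof
        assume "G = {}"
        then have "card (B - G) = card B" by simp
        then show False using lt X_lt by simp
      qed
      then obtain h where h: "convex_on_pts B h" "\<forall>x\<in>G. h x = g x"
        using extend[OF finite_subset[OF GB fin] cG] by blast
      have "{x\<in>B. g x \<noteq> h x} \<subseteq> B - G" using h(2) by auto
      then have "card {x\<in>B. g x \<noteq> h x} \<le> card (B - G)" by (intro card_mono) (use fin in auto)
      then have "real (card {x\<in>B. g x \<noteq> h x}) < eps * real (card B)" using lt unfolding X_def by linarith
      then show False using far h(1) unfolding eps_far_from_convex_def by fastforce
    qed
  qed
qed

end
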